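(* Let $D\ge1$, let $Q_D$ be the $D$-dimensional hypercube on $X=\{0,1\}^D$ with adjacency matrix $A$. The matrices $$\alpha^*_iA\alpha^*_j-\alpha^*_jA\alpha^*_i,\qquad 1\le i<j\le D,$$ form a basis for the space of antisymmetric $A$-like matrices of $Q_D$. In particular this space has dimension $\binom{D}{2}$.
   Context: $Q_D$ is the graph with vertex set $X=\{0,1\}^D$ (sequences $x=(x_1,\ldots,x_D)$, $x_i\in\{0,1\}$), two vertices adjacent iff they differ in exactly one coordinate. Matrices are real with rows and columns indexed by $X$. A matrix $B$ is $A$-like if $BA=AB$ and $B_{xy}=0$ for all $x,y\in X$ that are neither equal nor adjacent; $B$ is antisymmetric if $B^t=-B$. For $1\le i\le D$, $\alpha^*_i$ is the diagonal matrix with $(x,x)$-entry $1$ if $x_i=0$ and $-1$ if $x_i=1$. *)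

theory Defs
  imports "HOL-Analysis.Analysis"
begin

text \<open>Vertices of Q_D: boolean lists of length D; coordinate i (1-based) of x is x!(i-1),
  True standing for 1 and False for 0.\<close>
definition verts :: "nat \<Rightarrow> bool list set" where
  "verts D = {xs. length xs = D}"

definition adj :: "nat \<Rightarrow> bool list \<Rightarrow> bool list \<Rightarrow> bool" where
  "adj D x y \<longleftrightarrow> x \<in> verts D \<and> y \<in> verts D \<and> card {i. i < D \<and> x ! i \<noteq> y ! i} = 1"

text \<open>Matrices indexed by X are real functions on pairs of lists; a genuine X-indexed matrix
  vanishes outside X x X.\<close>
type_synonym mat = "bool list \<Rightarrow> bool list \<Rightarrow> real"

definition is_mat :: "nat \<Rightarrow> mat \<Rightarrow> bool" where
  "is_mat D B \<longleftrightarrow> (\<forall>x y. x \<notin> verts D \<or> y \<notin> verts D \<longrightarrow> B x y = 0)"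

definition mmul :: "nat \<Rightarrow> mat \<Rightarrow> mat \<Rightarrow> mat" where
  "mmul D B C = (\<lambda>x y. \<Sum>z\<in>verts D. B x z * C z y)"

definition adjmat :: "nat \<Rightarrow> mat" where
  "adjmat D = (\<lambda>x y. if adj D x y then 1 else 0)"

definition alpha_star :: "nat \<Rightarrow> nat \<Rightarrow> mat" where
  "alpha_star D i = (\<lambda>x y. if x \<in> verts D \<and> x = y then (if x ! (i - 1) then -1 else 1) else 0)"

definition A_like :: "nat \<Rightarrow> mat \<Rightarrow> bool" where
  "A_like D B \<longleftrightarrow> is_mat D B \<and> mmul D B (adjmat D) = mmul D (adjmat D) B \<and>
     (\<forall>x\<in>verts D. \<forall>y\<in>verts D. x \<noteq> y \<and> \<not> adj D x y \<longrightarrow> B x y = 0)"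

definition antisym_mat :: "mat \<Rightarrow> bool" where
  "antisym_mat B \<longleftrightarrow> (\<forall>x y. B y x = - B x y)"

definition gen :: "nat \<Rightarrow> nat \<Rightarrow> nat \<Rightarrow> mat" where
  "gen D i j = (\<lambda>x y. mmul D (alpha_star D i) (mmul D (adjmat D) (alpha_star D j)) x y
                     - mmul D (alpha_star D j) (mmul D (adjmat D) (alpha_star D i)) x y)"

definition pairs :: "nat \<Rightarrow> (nat \<times> nat) set" where
  "pairs D = {(i, j). 1 \<le> i \<and> i < j \<and> j \<le> D}"

end

theory Submission
  imports Defs
begin

definition flip :: "nat \<Rightarrow> bool list \<Rightarrow> bool list" where
  "flip i x = x[i := \<not> x!i]"
definition sg :: "nat \<Rightarrow> bool list \<Rightarrow> real" where
  "sg i x = (if x!i then -1 else 1)"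

lemma length_flip[simp]: "length (flip i x) = length x" by (simp add: flip_def)
lemma nth_flip: "i < length x \<Longrightarrow> flip i x ! j = (if j = i then \<not> x!i else x!j)"
  by (auto simp: flip_def nth_list_update)
lemma flip_beyond: "\<not> i < length x \<Longrightarrow> flip i x = x"
  unfolding flip_def by (rule list_update_beyond) simp
lemma flip_flip[simp]: "flip i (flip i x) = x"
  using flip_beyond[of i x] flip_beyond[of i "flip i x"]
  by (cases "i < length x") (auto simp: flip_def)
lemma flip_comm: "flip i (flip j x) = flip j (flip i x)"
  apply (cases "i < length x"; cases "j < length x")
  by (auto intro!: nth_equalityI simp: nth_flip flip_beyond)
lemma flip_verts[simp]: "flip i x \<in> verts D \<longleftrightarrow> x \<in> verts D" by (simp add: verts_def)
lemma flip_neq: "i < length x \<Longrightarrow> flip i x \<noteq> x"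
  by (metis nth_flip)
lemma flip_inj: "i < length x \<Longrightarrow> j < length x \<Longrightarrow> flip i x = flip j x \<longleftrightarrow> i = j"
  by (metis nth_flip)
lemma sg_flip: "i < length x \<Longrightarrow> sg j (flip i x) = (if j = i then - sg j x else sg j x)"
  by (auto simp: sg_def nth_flip)
lemma finite_verts[simp]: "finite (verts D)"
  using finite_lists_length_eq[of "UNIV::bool set" D] by (simp add: verts_def)

lemma adj_iff: assumes "x \<in> verts D" shows "adj D x y \<longleftrightarrow> (\<exists>i<D. y = flip i x)"
proof
  assume "adj D x y"
  then have y: "y \<in> verts D" and c: "card {i. i < D \<and> x!i \<noteq> y!i} = 1" by (auto simp: adj_def)
  then obtain i where i: "{i. i < D \<and> x!i \<noteq> y!i} = {i}" by (meson card_1_singletonE)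
  then have "i < D" by auto
  moreover have "y = flip i x"
  proof (rule nth_equalityI)
    show "length y = length (flip i x)" using y assms by (simp add: verts_def)
    fix j assume "j < length y"
    then have "j < D" using y by (simp add: verts_def)
    then show "y ! j = flip i x ! j" using i \<open>i < D\<close> assms
      by (auto simp: nth_flip verts_def)
  qed
  ultimately show "\<exists>i<D. y = flip i x" by blast
next
  assume "\<exists>i<D. y = flip i x"
  then obtain i where i: "i < D" "y = flip i x" by blast
  then have "{j. j < D \<and> x!j \<noteq> y!j} = {i}" using assms by (auto simp: nth_flip verts_def)
  then show "adj D x y" using assms i by (simp add: adj_def)
qed

lemma adj_sym: "adj D x y = adj D y x"
proof -
  have "{i. i < D \<and> x!i \<noteq> y!i} = {i. i<D \<and> y!i \<noteq> x!i}" by auto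
  then show ?thesis by (auto simp: adj_def)
qed

lemma adj_verts: "adj D x y \<Longrightarrow> x \<in> verts D \<and> y \<in> verts D" by (simp add: adj_def)

lemma mmul_A_right: assumes "y \<in> verts D"
  shows "mmul D B (adjmat D) x y = (\<Sum>k<D. B x (flip k y))"
proof -
  have "mmul D B (adjmat D) x y = (\<Sum>z\<in>verts D. if adj D z y then B x z else 0)"
    unfolding mmul_def adjmat_def by (intro sum.cong) auto
  also have "\<dots> = (\<Sum>z\<in>{z\<in>verts D. adj D z y}. B x z)"
    by (simp add: sum.inter_filter)
  also have "{z\<in>verts D. adj D z y} = (\<lambda>k. flip k y) ` {..<D}"
    using adj_iff[OF assms] adj_sym assms by auto
  also have "(\<Sum>z\<in>(\<lambda>k. flip k y) ` {..<D}. B x z) = (\<Sum>k<D. B x (flip k y))"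
    using assms by (subst sum.reindex) (auto simp: inj_on_def flip_inj verts_def)
  finally show ?thesis .
qed

lemma mmul_A_left: assumes "x \<in> verts D"
  shows "mmul D (adjmat D) B x y = (\<Sum>k<D. B (flip k x) y)"
proof -
  have "mmul D (adjmat D) B x y = (\<Sum>z\<in>verts D. if adj D x z then B z y else 0)"
    unfolding mmul_def adjmat_def by (intro sum.cong) auto
  also have "\<dots> = (\<Sum>z\<in>{z\<in>verts D. adj D x z}. B z y)"
    by (simp add: sum.inter_filter)
  also have "{z\<in>verts D. adj D x z} = (\<lambda>k. flip k x) ` {..<D}"
    using adj_iff[OF assms] assms by auto
  also have "(\<Sum>z\<in>(\<lambda>k. flip k x) ` {..<D}. B z y) = (\<Sum>k<D. B (flip k x) y)"
    using assms by (subst sum.reindex) (auto simp: inj_on_def flip_inj verts_def)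
  finally show ?thesis .
qed

lemma mmul_out:
  assumes "is_mat D B" "x \<notin> verts D \<or> y \<notin> verts D"
  shows "mmul D B (adjmat D) x y = 0" "mmul D (adjmat D) B x y = 0"
  using assms by (auto simp: mmul_def adjmat_def is_mat_def dest: adj_verts intro!: sum.neutral)

lemma mmul_diag_right:
  "mmul D M (alpha_star D j) x y = (if y \<in> verts D then M x y * sg (j-1) y else 0)"
proof -
  have "mmul D M (alpha_star D j) x y = (\<Sum>z\<in>verts D. if z = y then M x y * sg (j-1) y else 0)"
    unfolding mmul_def by (rule sum.cong) (auto simp: alpha_star_def sg_def)
  also have "\<dots> = (if y \<in> verts D then M x y * sg (j-1) y else 0)"
    by (simp add: sum.delta)
  finally show ?thesis .
qed

lemma mmul_diag_left:
  "mmul D (alpha_star D i) M x y = (if x \<in> verts D then sg (i-1) x * M x y else 0)"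
proof -
  have "mmul D (alpha_star D i) M x y = (\<Sum>z\<in>verts D. if z = x then sg (i-1) x * M x y else 0)"
    unfolding mmul_def by (rule sum.cong) (auto simp: alpha_star_def sg_def)
  also have "\<dots> = (if x \<in> verts D then sg (i-1) x * M x y else 0)"
    by (simp add: sum.delta)
  finally show ?thesis .
qed

lemma gen_eq: "gen D i j x y =
   (if adj D x y then sg (i-1) x * sg (j-1) y - sg (j-1) x * sg (i-1) y else 0)"
  by (auto simp: gen_def mmul_diag_left mmul_diag_right adjmat_def dest: adj_verts)

definition good :: "nat \<Rightarrow> mat \<Rightarrow> bool" where
  "good D B \<longleftrightarrow> is_mat D B \<and> antisym_mat B \<and>
     (\<forall>x\<in>verts D. \<forall>y\<in>verts D. x \<noteq> y \<and> \<not> adj D x y \<longrightarrow> B x y = 0)"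

lemma good_rep:
  assumes g: "good D B" and x: "x \<in> verts D" and y: "y \<in> verts D"
  shows "B x y = (\<Sum>n<D. if y = flip n x then B x (flip n x) else 0)"
proof (cases "\<exists>n<D. y = flip n x")
  case True
  then obtain n where n: "n < D" "y = flip n x" by blast
  have "(\<Sum>n'<D. if y = flip n' x then B x (flip n' x) else 0)
      = (\<Sum>n'<D. if n' = n then B x (flip n' x) else 0)"
    using n x by (intro sum.cong) (auto simp: flip_inj verts_def)
  also have "\<dots> = B x y" using n by (simp add: sum.delta)
  finally show ?thesis by simp
next
  case False
  then have s: "(\<Sum>n<D. if y = flip n x then B x (flip n x) else 0) = 0"
    by (intro sum.neutral) auto
  have "B x y = 0"
  proof (cases "x = y")
    case True
    have "\<forall>x y. B y x = - B x y" using g unfolding good_def antisym_mat_def by blast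
    then have "B x x = - B x x" by blast
    then show ?thesis using True by simp
  next
    case False
    then have "\<not> adj D x y" using \<open>\<not> (\<exists>n<D. y = flip n x)\<close> adj_iff[OF x] by auto
    then show ?thesis using g x y False by (auto simp: good_def)
  qed
  then show ?thesis using s by simp
qed

lemma three_neq:
  assumes "m < length x" "k < length x" "l < length x" "m \<noteq> k" "m \<noteq> l" "k \<noteq> l"
  shows "flip m (flip k (flip l x)) \<noteq> flip n x" "flip m (flip k (flip l x)) \<noteq> x"
proof -
  show ne: "flip m (flip k (flip l x)) \<noteq> x"
  proof
    assume eq: "flip m (flip k (flip l x)) = x"
    have "flip m (flip k (flip l x)) ! m = x ! m" using eq by simp
    then show False using assms by (simp add: nth_flip)
  qed
  show "flip m (flip k (flip l x)) \<noteq> flip n x"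
  proof (cases "n < length x")
    case False
    then show ?thesis using ne flip_beyond[OF False] by simp
  next
    case True
    show ?thesis
    proof
      assume eq: "flip m (flip k (flip l x)) = flip n x"
      have a: "flip m (flip k (flip l x)) ! m = flip n x ! m" using eq by simp
      have b: "flip m (flip k (flip l x)) ! k = flip n x ! k" using eq by simp
      have c: "flip m (flip k (flip l x)) ! l = flip n x ! l" using eq by simp
      show False
      proof (cases "n = m")
        case True
        then show False using b assms by (simp add: nth_flip)
      next
        case False
        then show False using a assms True by (simp add: nth_flip)
      qed
    qed
  qed
qed

lemma sum_two:
  fixes f :: "nat \<Rightarrow> real"
  assumes "k < D" "l < D" "k \<noteq> l" "\<And>m. m < D \<Longrightarrow> m \<noteq> k \<Longrightarrow> m \<noteq> l \<Longrightarrow> f m = 0"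
  shows "(\<Sum>m<D. f m) = f k + f l"
proof -
  have "(\<Sum>m<D. f m) = (\<Sum>m\<in>{k,l}. f m)"
    using assms by (intro sum.mono_neutral_right) auto
  then show ?thesis using assms by simp
qed

lemma antisymD: "antisym_mat B \<Longrightarrow> B v u = - B u v"
  unfolding antisym_mat_def by blast

lemma comm_from:
  assumes g: "good D B"
  and c3: "\<And>x. x \<in> verts D \<Longrightarrow> (\<Sum>k<D. B x (flip k x)) = 0"
  and c2: "\<And>x k l. x \<in> verts D \<Longrightarrow> k < D \<Longrightarrow> l < D \<Longrightarrow> k \<noteq> l \<Longrightarrow>
     B x (flip k x) + B x (flip l x) = B (flip l x) (flip k (flip l x)) + B (flip k x) (flip l (flip k x))"
  shows "mmul D B (adjmat D) = mmul D (adjmat D) B"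
proof (intro ext)
  fix x y
  show "mmul D B (adjmat D) x y = mmul D (adjmat D) B x y"
  proof (cases "x \<in> verts D \<and> y \<in> verts D")
    case False
    then show ?thesis using mmul_out[of D B x y] g by (auto simp: good_def)
  next
    case True
    then have x: "x \<in> verts D" and y: "y \<in> verts D" by auto
    have as: "antisym_mat B" using g by (simp add: good_def)
    define b where "b = (\<lambda>k u. B u (flip k u))"
    define I where "I = (\<lambda>k n. y = flip n (flip k x))"
    have Isym: "I k n = I n k" for k n by (simp add: I_def flip_comm)
    have L: "mmul D B (adjmat D) x y = (\<Sum>k<D. \<Sum>n<D. if I k n then b k x else 0)"
    proof -
      have "mmul D B (adjmat D) x y = (\<Sum>k<D. B x (flip k y))" by (rule mmul_A_right[OF y])
      also have "\<dots> = (\<Sum>k<D. \<Sum>n<D. if flip k y = flip n x then b n x else 0)"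
        unfolding b_def using good_rep[OF g x] y by simp
      also have "\<dots> = (\<Sum>k<D. \<Sum>n<D. if y = flip k (flip n x) then b n x else 0)"
        by (intro sum.cong refl) (metis flip_flip)
      also have "\<dots> = (\<Sum>n<D. \<Sum>k<D. if y = flip k (flip n x) then b n x else 0)" by (rule sum.swap)
      finally show ?thesis by (simp add: I_def)
    qed
    have R: "mmul D (adjmat D) B x y = (\<Sum>k<D. \<Sum>n<D. if I k n then b n (flip k x) else 0)"
    proof -
      have "mmul D (adjmat D) B x y = (\<Sum>k<D. B (flip k x) y)" by (rule mmul_A_left[OF x])
      also have "\<dots> = (\<Sum>k<D. \<Sum>n<D. if I k n then b n (flip k x) else 0)"
        unfolding b_def I_def using good_rep[OF g _ y] x by simp
      finally show ?thesis .
    qed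
    define T where "T = (\<lambda>k n. if I k n then b k x - b n (flip k x) else 0)"
    have LR: "mmul D B (adjmat D) x y - mmul D (adjmat D) B x y = (\<Sum>k<D. \<Sum>n<D. T k n)"
    proof -
      have "(\<Sum>k<D. \<Sum>n<D. T k n) = (\<Sum>k<D. (\<Sum>n<D. if I k n then b k x else 0) - (\<Sum>n<D. if I k n then b n (flip k x) else 0))"
        unfolding T_def sum_subtractf[symmetric] by (intro sum.cong refl) simp
      also have "\<dots> = (\<Sum>k<D. \<Sum>n<D. if I k n then b k x else 0) - (\<Sum>k<D. \<Sum>n<D. if I k n then b n (flip k x) else 0)"
        by (simp add: sum_subtractf)
      finally show ?thesis using L R by simp
    qed
    have sw: "(\<Sum>k<D. \<Sum>n<D. T k n) = (\<Sum>k<D. \<Sum>n<D. T n k)" by (rule sum.swap)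
    have pt: "(\<Sum>n<D. T k n + T n k) = (if y = x then 4 * b k x else 0)" if k: "k < D" for k
    proof -
      have "(\<Sum>n<D. T k n + T n k) = (\<Sum>n<D. if n = k then T k k + T k k else 0)"
      proof (rule sum.cong[OF refl])
        fix n assume n: "n \<in> {..<D}"
        show "T k n + T n k = (if n = k then T k k + T k k else 0)"
        proof (cases "n = k")
          case True then show ?thesis by simp
        next
          case False
          have "b k x + b n x = b k (flip n x) + b n (flip k x)"
            using c2[OF x k, of n] n False by (simp add: b_def)
          then show ?thesis using False Isym[of k n] by (simp add: T_def)
        qed
      qed
      also have "\<dots> = T k k + T k k" using k by (simp add: sum.delta)
      also have "\<dots> = (if y = x then 4 * b k x else 0)"
      proof -
        have "b k (flip k x) = - b k x" unfolding b_def using antisymD[OF as, of x "flip k x"] by simp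
        then show ?thesis by (simp add: T_def I_def)
      qed
      finally show ?thesis .
    qed
    have diag: "(\<Sum>k<D. \<Sum>n<D. T k n + T n k) = 0"
    proof -
      have "(\<Sum>k<D. \<Sum>n<D. T k n + T n k) = (\<Sum>k<D. if y = x then 4 * b k x else 0)"
        using pt by (intro sum.cong refl) simp
      also have "\<dots> = 0"
      proof (cases "y = x")
        case True
        have "(\<Sum>k<D. 4 * b k x) = 4 * (\<Sum>k<D. b k x)" by (simp add: sum_distrib_left)
        also have "\<dots> = 0" using c3[OF x] by (simp add: b_def)
        finally show ?thesis using True by simp
      qed simp
      finally show ?thesis .
    qed
    have "(\<Sum>k<D. \<Sum>n<D. T k n + T n k) = 2 * (\<Sum>k<D. \<Sum>n<D. T k n)"
      using sw by (simp add: sum.distrib)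
    then have "(\<Sum>k<D. \<Sum>n<D. T k n) = 0" using diag by simp
    then show ?thesis using LR by simp
  qed
qed

lemma Alike_good: "A_like D B \<Longrightarrow> antisym_mat B \<Longrightarrow> good D B"
  by (simp add: A_like_def good_def)

lemma cond3:
  assumes "A_like D B" "antisym_mat B" "x \<in> verts D"
  shows "(\<Sum>k<D. B x (flip k x)) = 0"
proof -
  have e: "mmul D B (adjmat D) x x = mmul D (adjmat D) B x x" using assms(1) by (simp add: A_like_def)
  have "(\<Sum>k<D. B (flip k x) x) = (\<Sum>k<D. - B x (flip k x))"
    using antisymD[OF assms(2)] by (intro sum.cong refl) blast
  also have "\<dots> = - (\<Sum>k<D. B x (flip k x))" by (simp add: sum_negf)
  finally show ?thesis using e mmul_A_right[OF assms(3)] mmul_A_left[OF assms(3)] by simp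
qed

lemma flip3: "flip l (flip k (flip l x)) = flip k x"
  by (metis flip_comm flip_flip)

lemma cond2:
  assumes A: "A_like D B" and as: "antisym_mat B" and x: "x \<in> verts D"
    and kl: "k < D" "l < D" "k \<noteq> l"
  shows "B x (flip k x) + B x (flip l x) = B (flip l x) (flip k (flip l x)) + B (flip k x) (flip l (flip k x))"
proof -
  have g: "good D B" using A as by (rule Alike_good)
  have lx: "length x = D" using x by (simp add: verts_def)
  define y where "y = flip k (flip l x)"
  have y: "y \<in> verts D" using x by (simp add: y_def)
  have e: "mmul D B (adjmat D) x y = mmul D (adjmat D) B x y" using A by (simp add: A_like_def)
  have zero: "\<And>u v. u \<in> verts D \<Longrightarrow> v \<in> verts D \<Longrightarrow> u \<noteq> v \<Longrightarrow> \<not> adj D u v \<Longrightarrow> B u v = 0"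
    using g by (auto simp: good_def)
  have L: "(\<Sum>m<D. B x (flip m y)) = B x (flip k y) + B x (flip l y)"
  proof (rule sum_two[OF kl])
    fix m assume m: "m < D" "m \<noteq> k" "m \<noteq> l"
    have n1: "flip m y \<noteq> x" using three_neq(2)[of m x k l] m kl lx by (simp add: y_def)
    have n2: "\<not> adj D x (flip m y)"
    proof
      assume "adj D x (flip m y)"
      then obtain n where "n < D" "flip m y = flip n x" using adj_iff[OF x] by blast
      then show False using three_neq(1)[of m x k l n] m kl lx by (simp add: y_def)
    qed
    show "B x (flip m y) = 0" using zero[OF x _ _ n2] n1 y by auto
  qed
  have R: "(\<Sum>m<D. B (flip m x) y) = B (flip k x) y + B (flip l x) y"
  proof (rule sum_two[OF kl])
    fix m assume m: "m < D" "m \<noteq> k" "m \<noteq> l"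
    have n1: "flip m x \<noteq> y"
    proof
      assume "flip m x = y"
      then have "flip m y = x" by (metis flip_flip)
      then show False using three_neq(2)[of m x k l] m kl lx by (simp add: y_def)
    qed
    have n2: "\<not> adj D (flip m x) y"
    proof
      assume "adj D (flip m x) y"
      then obtain n where "n < D" "y = flip n (flip m x)" using adj_iff[of "flip m x" D y] x by auto
      then have "flip m y = flip n x" by (metis flip3)
      then show False using three_neq(1)[of m x k l n] m kl lx by (simp add: y_def)
    qed
    show "B (flip m x) y = 0" using zero[OF _ y n1 n2] x by auto
  qed
  have "B x (flip l x) + B x (flip k x) = B (flip k x) y + B (flip l x) y"
    using e L R mmul_A_right[OF y] mmul_A_left[OF x] by (simp add: y_def flip3)
  then show ?thesis by (simp add: y_def flip_comm[of l k])
qed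

definition Cm :: "(nat \<times> nat \<Rightarrow> real) \<Rightarrow> nat \<Rightarrow> nat \<Rightarrow> real" where
  "Cm c k l = (if k < l then c (Suc k, Suc l) else if l < k then - c (Suc l, Suc k) else 0)"

definition comb :: "nat \<Rightarrow> (nat \<times> nat \<Rightarrow> real) \<Rightarrow> mat" where
  "comb D c = (\<lambda>x y. \<Sum>p\<in>pairs D. c p * gen D (fst p) (snd p) x y)"

lemma Cm_anti: "Cm c l k = - Cm c k l"
  by (simp add: Cm_def)

lemma pairs_sum:
  "(\<Sum>p\<in>pairs D. f p) = (\<Sum>i<D. \<Sum>j<D. if i < j then f (Suc i, Suc j) else (0::real))"
proof -
  have e: "pairs D = (\<lambda>(i,j). (Suc i,Suc j)) ` {(i,j). i<j \<and> j<D}"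
  proof
    show "pairs D \<subseteq> (\<lambda>(i,j). (Suc i,Suc j)) ` {(i,j). i<j \<and> j<D}"
    proof
      fix p assume "p \<in> pairs D"
      then obtain a b where p: "p = (a,b)" "1 \<le> a" "a < b" "b \<le> D" by (auto simp: pairs_def)
      show "p \<in> (\<lambda>(i,j). (Suc i,Suc j)) ` {(i,j). i<j \<and> j<D}"
        by (rule image_eqI[where x="(a-1,b-1)"]) (use p in auto)
    qed
  qed (auto simp: pairs_def)
  have inj: "inj_on (\<lambda>(i,j). (Suc i::nat,Suc j::nat)) {(i,j). i<j \<and> j<D}"
    by (auto simp: inj_on_def)
  have "(\<Sum>p\<in>pairs D. f p) = (\<Sum>q\<in>{(i,j). i<j \<and> j<D}. f (Suc (fst q), Suc (snd q)))"
    unfolding e by (subst sum.reindex[OF inj]) (auto intro!: sum.cong)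
  also have "{(i,j). i<j \<and> j<D} = {q \<in> {..<D} \<times> {..<D}. fst q < snd q}" by auto
  also have "(\<Sum>q\<in>{q \<in> {..<D} \<times> {..<D}. fst q < snd q}. f (Suc (fst q), Suc (snd q)))
      = (\<Sum>q\<in>{..<D} \<times> {..<D}. if fst q < snd q then f (Suc (fst q), Suc (snd q)) else 0)"
    by (simp add: sum.inter_filter)
  also have "\<dots> = (\<Sum>i<D. \<Sum>j<D. if i < j then f (Suc i, Suc j) else 0)"
    by (simp add: sum.cartesian_product case_prod_beta)
  finally show ?thesis .
qed

lemma gen_flip:
  assumes "x \<in> verts D" "k < D"
  shows "gen D (Suc i) (Suc j) x (flip k x) = sg i x * sg j x * ((if i = k then 2 else 0) - (if j = k then 2 else 0))"
proof -
  have "adj D x (flip k x)" using adj_iff[OF assms(1)] assms(2) by auto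
  moreover have "k < length x" using assms by (simp add: verts_def)
  ultimately show ?thesis by (auto simp: gen_eq sg_flip algebra_simps)
qed

lemma sumflip:
  assumes "l < length x" "l < D"
  shows "(\<Sum>j<D. a j * sg j (flip l x)) = (\<Sum>j<D. a j * sg j x) - 2 * a l * sg l x"
proof -
  have "(\<Sum>j<D. a j * sg j (flip l x)) = (\<Sum>j<D. a j * sg j x - (if j = l then 2 * a j * sg j x else 0))"
    using assms(1) by (intro sum.cong refl) (auto simp: sg_flip)
  also have "\<dots> = (\<Sum>j<D. a j * sg j x) - 2 * a l * sg l x"
    using assms(2) by (simp add: sum_subtractf sum.delta)
  finally show ?thesis .
qed

lemma comb_flip:
  assumes x: "x \<in> verts D" and k: "k < D"
  shows "comb D c x (flip k x) = 2 * sg k x * (\<Sum>l<D. Cm c k l * sg l x)"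
proof -
  define G where "G = (\<lambda>i j. if i < j then 2 * c (Suc i, Suc j) * sg i x * sg j x else 0)"
  have "comb D c x (flip k x) = (\<Sum>i<D. \<Sum>j<D. if i < j then c (Suc i,Suc j) * gen D (Suc i) (Suc j) x (flip k x) else 0)"
    unfolding comb_def by (subst pairs_sum) (simp only: fst_conv snd_conv)
  also have "\<dots> = (\<Sum>i<D. \<Sum>j<D. (if i = k then G i j else 0) - (if j = k then G i j else 0))"
    by (intro sum.cong refl) (auto simp: gen_flip[OF x k] G_def)
  also have "\<dots> = (\<Sum>i<D. \<Sum>j<D. if i = k then G i j else 0) - (\<Sum>i<D. \<Sum>j<D. if j = k then G i j else 0)"
    by (simp add: sum_subtractf)
  also have "\<dots> = (\<Sum>j<D. G k j) - (\<Sum>i<D. G i k)"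
  proof -
    have "(\<Sum>i<D. \<Sum>j<D. if i = k then G i j else 0) = (\<Sum>i<D. if i = k then (\<Sum>j<D. G i j) else 0)"
      by (intro sum.cong refl) simp
    also have "\<dots> = (\<Sum>j<D. G k j)" by (subst sum.delta) (auto simp: k)
    finally have 1: "(\<Sum>i<D. \<Sum>j<D. if i = k then G i j else 0) = (\<Sum>j<D. G k j)" .
    have 2: "(\<Sum>i<D. \<Sum>j<D. if j = k then G i j else 0) = (\<Sum>i<D. G i k)"
      by (intro sum.cong refl) (simp add: k sum.delta)
    show ?thesis unfolding 1 2 ..
  qed
  also have "\<dots> = (\<Sum>l<D. G k l - G l k)" by (simp add: sum_subtractf)
  also have "\<dots> = (\<Sum>l<D. 2 * sg k x * (Cm c k l * sg l x))"
    by (intro sum.cong refl) (auto simp: G_def Cm_def)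
  also have "\<dots> = 2 * sg k x * (\<Sum>l<D. Cm c k l * sg l x)" by (simp add: sum_distrib_left)
  finally show ?thesis .
qed

lemma gen_anti: "gen D i j y x = - gen D i j x y"
  by (simp add: gen_eq adj_sym)

lemma comb_good: "good D (comb D c)"
  unfolding good_def
proof (intro conjI ballI impI)
  show "is_mat D (comb D c)"
    unfolding is_mat_def comb_def by (auto simp: gen_eq dest: adj_verts intro!: sum.neutral)
  show "antisym_mat (comb D c)"
  proof -
    have "comb D c y x = - comb D c x y" for x y
    proof -
      have "comb D c y x = (\<Sum>p\<in>pairs D. - (c p * gen D (fst p) (snd p) x y))"
        unfolding comb_def using gen_anti[of D _ _ y x] by (intro sum.cong refl) simp
      then show ?thesis unfolding comb_def by (simp add: sum_negf)
    qed
    then show ?thesis unfolding antisym_mat_def by blast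
  qed
  fix x y assume "x \<in> verts D" "y \<in> verts D" "x \<noteq> y \<and> \<not> adj D x y"
  then show "comb D c x y = 0" unfolding comb_def by (auto simp: gen_eq intro!: sum.neutral)
qed

lemma sg_sq: "sg i x * sg i x = 1" by (simp add: sg_def)

lemma comb_Alike: "A_like D (comb D c)"
proof -
  have g: "good D (comb D c)" by (rule comb_good)
  define P where "P = (\<lambda>k x. \<Sum>l<D. Cm c k l * sg l x)"
  have cf: "comb D c x (flip k x) = 2 * sg k x * P k x" if "x \<in> verts D" "k < D" for x k
    using comb_flip[OF that] by (simp add: P_def)
  have comm: "mmul D (comb D c) (adjmat D) = mmul D (adjmat D) (comb D c)"
  proof (rule comm_from[OF g])
    fix x assume x: "x \<in> verts D"
    define S where "S = (\<Sum>k<D. \<Sum>l<D. Cm c k l * (sg k x * sg l x))"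
    have "S = (\<Sum>l<D. \<Sum>k<D. Cm c k l * (sg k x * sg l x))" unfolding S_def by (rule sum.swap)
    also have "\<dots> = (\<Sum>l<D. \<Sum>k<D. - (Cm c l k * (sg l x * sg k x)))"
      by (intro sum.cong refl) (auto simp: Cm_def)
    also have "\<dots> = - S" unfolding S_def by (simp add: sum_negf)
    finally have "S = 0" by simp
    have "(\<Sum>k<D. comb D c x (flip k x)) = (\<Sum>k<D. 2 * (\<Sum>l<D. Cm c k l * (sg k x * sg l x)))"
      using cf[OF x] by (intro sum.cong refl) (simp add: P_def sum_distrib_left algebra_simps)
    also have "\<dots> = 2 * S" unfolding S_def by (simp add: sum_distrib_left)
    finally show "(\<Sum>k<D. comb D c x (flip k x)) = 0" using \<open>S = 0\<close> by simp
  next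
    fix x k l assume x: "x \<in> verts D" and kl: "k < D" "l < D" "k \<noteq> l"
    have lx: "length x = D" using x by (simp add: verts_def)
    have "comb D c (flip l x) (flip k (flip l x)) = 2 * sg k (flip l x) * P k (flip l x)"
      using cf[of "flip l x" k] x kl by simp
    also have "\<dots> = 2 * sg k x * (P k x - 2 * Cm c k l * sg l x)"
    proof -
      have "P k (flip l x) = P k x - 2 * Cm c k l * sg l x" unfolding P_def
        by (rule sumflip) (use kl lx in auto)
      then show ?thesis using kl lx by (simp add: sg_flip)
    qed
    finally have 1: "comb D c (flip l x) (flip k (flip l x)) = 2 * sg k x * (P k x - 2 * Cm c k l * sg l x)" .
    have "comb D c (flip k x) (flip l (flip k x)) = 2 * sg l (flip k x) * P l (flip k x)"
      using cf[of "flip k x" l] x kl by simp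
    also have "\<dots> = 2 * sg l x * (P l x - 2 * Cm c l k * sg k x)"
    proof -
      have "P l (flip k x) = P l x - 2 * Cm c l k * sg k x" unfolding P_def
        by (rule sumflip) (use kl lx in auto)
      then show ?thesis using kl lx by (simp add: sg_flip)
    qed
    finally have 2: "comb D c (flip k x) (flip l (flip k x)) = 2 * sg l x * (P l x - 2 * Cm c l k * sg k x)" .
    show "comb D c x (flip k x) + comb D c x (flip l x) =
        comb D c (flip l x) (flip k (flip l x)) + comb D c (flip k x) (flip l (flip k x))"
      unfolding 1 2 using cf[OF x kl(1)] cf[OF x kl(2)] Cm_anti[of c l k]
      by (simp add: algebra_simps)
  qed
  show ?thesis using g comm unfolding A_like_def good_def by blast
qed

lemma sg_nz: "sg i x \<noteq> 0" by (simp add: sg_def)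

lemma z0_verts: "replicate D False \<in> verts D" by (simp add: verts_def)
lemma sg_z0: "j < D \<Longrightarrow> sg j (replicate D False) = 1" by (simp add: sg_def)

lemma lin_indep:
  assumes z: "comb D c = (\<lambda>x y. 0)"
  shows "\<forall>p\<in>pairs D. c p = 0"
proof
  fix p assume "p \<in> pairs D"
  then obtain a b where p: "p = (a,b)" "1 \<le> a" "a < b" "b \<le> D" by (auto simp: pairs_def)
  define k where "k = a - 1"
  define m where "m = b - 1"
  have km: "k < D" "m < D" "k < m" using p by (auto simp: k_def m_def)
  define z0 where "z0 = replicate D False"
  have P0: "(\<Sum>l<D. Cm c k l * sg l x) = 0" if "x \<in> verts D" for x
  proof -
    have "2 * sg k x * (\<Sum>l<D. Cm c k l * sg l x) = 0"
      using comb_flip[OF that km(1), of c] z by simp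
    then show ?thesis using sg_nz[of k x] by simp
  qed
  have e1: "(\<Sum>l<D. Cm c k l * sg l z0) = 0" using P0 z0_verts by (simp add: z0_def)
  have e2: "(\<Sum>l<D. Cm c k l * sg l (flip m z0)) = 0" using P0 z0_verts by (simp add: z0_def)
  have "(\<Sum>l<D. Cm c k l * sg l (flip m z0)) = (\<Sum>l<D. Cm c k l * sg l z0) - 2 * Cm c k m * sg m z0"
    by (rule sumflip) (use km in \<open>auto simp: z0_def\<close>)
  then have "Cm c k m = 0" using e1 e2 sg_z0[OF km(2)] by (simp add: z0_def)
  moreover have "Cm c k m = c p" using km p by (simp add: Cm_def k_def m_def)
  ultimately show "c p = 0" by simp
qed

definition Tset :: "bool list \<Rightarrow> nat set" where
  "Tset x = {i. i < length x \<and> x!i}"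

lemma finite_Tset[simp]: "finite (Tset x)" by (simp add: Tset_def)

lemma Tset_flip: "i \<in> Tset x \<Longrightarrow> Tset (flip i x) = Tset x - {i}"
  by (auto simp: Tset_def nth_flip)

lemma Tset_flip_less: "i \<in> Tset x \<Longrightarrow> card (Tset (flip i x)) < card (Tset x)"
  using card_gt_0_iff[of "Tset x"] by (auto simp: Tset_flip)

lemma Tset_empty: "x \<in> verts D \<Longrightarrow> Tset x = {} \<Longrightarrow> x = replicate D False"
  by (rule nth_equalityI) (auto simp: verts_def Tset_def)

lemma Tset_single: "x \<in> verts D \<Longrightarrow> Tset x = {l} \<Longrightarrow> x = flip l (replicate D False)"
proof -
  assume x: "x \<in> verts D" and t: "Tset x = {l}"
  then have l: "l < D" "x ! l" by (auto simp: Tset_def verts_def)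
  show ?thesis
  proof (rule nth_equalityI)
    show "length x = length (flip l (replicate D False))" using x by (simp add: verts_def)
    fix i assume "i < length x"
    then show "x ! i = flip l (replicate D False) ! i"
      using t l x by (auto simp: Tset_def verts_def nth_flip)
  qed
qed

lemma spanning:
  assumes A: "A_like D B" and as: "antisym_mat B"
  shows "\<exists>c. B = comb D c"
proof -
  have g: "good D B" using A as by (rule Alike_good)
  define b where "b = (\<lambda>k x. B x (flip k x))"
  have b1: "b k (flip k x) = - b k x" for k x
    unfolding b_def using antisymD[OF as, of x "flip k x"] by simp
  have b3: "x \<in> verts D \<Longrightarrow> (\<Sum>k<D. b k x) = 0" for x
    unfolding b_def by (rule cond3[OF A as])
  have b2: "b k x + b l x = b k (flip l x) + b l (flip k x)"
    if "x \<in> verts D" "k < D" "l < D" "k \<noteq> l" for x k l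
    unfolding b_def using cond2[OF A as that] .
  have bQ: "b k x - b k (flip l x) - b k (flip m x) + b k (flip l (flip m x)) = 0"
    if x: "x \<in> verts D" and d: "k < D" "l < D" "m < D" "k \<noteq> l" "k \<noteq> m" "l \<noteq> m" for x k l m
  proof -
    define Q where "Q = (\<lambda>k l m. b k x - b k (flip l x) - b k (flip m x) + b k (flip l (flip m x)))"
    have anti: "Q k l m = - Q l k m" if "k < D" "l < D" "m < D" "k \<noteq> l" "k \<noteq> m" "l \<noteq> m" for k l m
    proof -
      have 1: "b k x + b l x = b k (flip l x) + b l (flip k x)" using b2[OF x, of k l] that by simp
      have 2: "b k (flip m x) + b l (flip m x) = b k (flip l (flip m x)) + b l (flip k (flip m x))"
        using b2[of "flip m x" k l] x that by simp
      show ?thesis unfolding Q_def using 1 2 by simp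
    qed
    have sym: "Q k l m = Q k m l" for k l m unfolding Q_def by (simp add: flip_comm[of l m] algebra_simps)
    have "Q k l m = Q k m l" by (rule sym)
    also have "\<dots> = - Q m k l" using anti[of k m l] d by simp
    also have "\<dots> = - Q m l k" using sym[of m k l] by simp
    also have "\<dots> = Q l m k" using anti[of m l k] d by simp
    also have "\<dots> = Q l k m" by (rule sym)
    also have "\<dots> = - Q k l m" using anti[of l k m] d by simp
    finally have "Q k l m = 0" by simp
    then show ?thesis by (simp add: Q_def)
  qed
  define z0 where "z0 = replicate D False"
  have z0: "z0 \<in> verts D" by (simp add: z0_def z0_verts)
  have lz0: "length z0 = D" by (simp add: z0_def)
  have sz0: "j < D \<Longrightarrow> sg j z0 = 1" for j by (simp add: z0_def sg_z0)
  define a where "a = (\<lambda>k l. if k = l then 0 else (b k z0 - b k (flip l z0)) / 2)"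
  have akk: "a k k = 0" for k by (simp add: a_def)
  have aanti: "a l k = - a k l" if "k < D" "l < D" for k l
  proof (cases "k = l")
    case False
    then show ?thesis using b2[OF z0 that False] by (simp add: a_def field_simps)
  qed (simp add: a_def)
  have bz0: "b k z0 = (\<Sum>l<D. a k l)" if k: "k < D" for k
  proof -
    have pt: "b l (flip k z0) = b l z0 + 2 * a k l - (if l = k then 2 * b k z0 else 0)" if l: "l < D" for l
    proof (cases "l = k")
      case True
      then show ?thesis using b1[of k z0] by (simp add: akk)
    next
      case False
      then show ?thesis using aanti[OF k l] by (simp add: a_def field_simps)
    qed
    have "0 = (\<Sum>l<D. b l (flip k z0))" using b3[of "flip k z0"] z0 by simp
    also have "\<dots> = (\<Sum>l<D. b l z0 + 2 * a k l - (if l = k then 2 * b k z0 else 0))"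
      using pt by (intro sum.cong refl) simp
    also have "\<dots> = (\<Sum>l<D. b l z0) + 2 * (\<Sum>l<D. a k l) - 2 * b k z0"
      using k by (simp add: sum.distrib sum_subtractf sum_distrib_left)
    also have "\<dots> = 2 * (\<Sum>l<D. a k l) - 2 * b k z0" using b3[OF z0] by simp
    finally show ?thesis by simp
  qed
  define F where "F = (\<lambda>k x. sg k x * (\<Sum>l<D. a k l * sg l x))"
  define G where "G = (\<lambda>k x. b k x - F k x)"
  have SF: "(\<Sum>j<D. a k j * sg j (flip l x)) = (\<Sum>j<D. a k j * sg j x) - 2 * a k l * sg l x"
    if "x \<in> verts D" "l < D" for x k l
    by (rule sumflip) (use that in \<open>auto simp: verts_def\<close>)
  have G1: "G k (flip k x) = - G k x" if "x \<in> verts D" "k < D" for k x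
  proof -
    have "F k (flip k x) = - F k x"
      using that SF[OF that, of k] by (simp add: F_def sg_flip verts_def akk)
    then show ?thesis using b1[of k x] by (simp add: G_def)
  qed
  have G2: "G k x - G k (flip l x) - G k (flip m x) + G k (flip l (flip m x)) = 0"
    if x: "x \<in> verts D" and d: "k < D" "l < D" "m < D" "k \<noteq> l" "k \<noteq> m" "l \<noteq> m" for x k l m
  proof -
    have lx: "length x = D" using x by (simp add: verts_def)
    define S where "S = (\<lambda>x. \<Sum>j<D. a k j * sg j x)"
    have s1: "S (flip l x) = S x - 2 * a k l * sg l x" using SF[OF x d(2)] by (simp add: S_def)
    have s2: "S (flip m x) = S x - 2 * a k m * sg m x" using SF[OF x d(3)] by (simp add: S_def)
    have s3: "S (flip l (flip m x)) = S (flip m x) - 2 * a k l * sg l (flip m x)"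
      using SF[of "flip m x" l k] x d by (simp add: S_def)
    have f: "F k y = sg k y * S y" for y by (simp add: F_def S_def)
    have "F k x - F k (flip l x) - F k (flip m x) + F k (flip l (flip m x)) = 0"
      unfolding f s1 s3 using d lx by (simp add: sg_flip algebra_simps)
    then show ?thesis using bQ[OF x d] by (simp add: G_def)
  qed
  have G3: "G k z0 = 0" if "k < D" for k
    using bz0[OF that] sz0 that by (simp add: G_def F_def)
  have G4: "G k (flip l z0) = 0" if "k < D" "l < D" "k \<noteq> l" for k l
  proof -
    have "F k (flip l z0) = (\<Sum>j<D. a k j) - 2 * a k l"
      using SF[OF z0 that(2), of k] sz0 that lz0 by (simp add: F_def sg_flip)
    also have "\<dots> = b k (flip l z0)" using bz0[OF that(1)] that by (simp add: a_def field_simps)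
    finally show ?thesis by (simp add: G_def)
  qed
  have Gz: "G k x = 0" if k: "k < D" and x: "x \<in> verts D" for k x
  proof -
    have "\<forall>x. x \<in> verts D \<longrightarrow> card (Tset x) = n \<longrightarrow> G k x = 0" for n
    proof (induction n rule: less_induct)
      case (less n)
      show ?case
      proof (intro allI impI)
        fix x assume x: "x \<in> verts D" and n: "card (Tset x) = n"
        have IH: "\<And>y. y \<in> verts D \<Longrightarrow> card (Tset y) < card (Tset x) \<Longrightarrow> G k y = 0"
          using less n by blast
        have lx: "length x = D" using x by (simp add: verts_def)
        show "G k x = 0"
        proof (cases "Tset x = {}")
          case True
          then show ?thesis using Tset_empty[OF x] G3[OF k] by (simp add: z0_def)
        next
          case False
          show ?thesis
          proof (cases "k \<in> Tset x")
            case True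
            have "G k (flip k x) = 0" using IH[of "flip k x"] Tset_flip_less[OF True] x by simp
            then show ?thesis using G1[of "flip k x" k] x k by simp
          next
            case kn: False
            obtain l where l: "l \<in> Tset x" using False by blast
            have lD: "l < D" and lk: "l \<noteq> k" using l kn lx by (auto simp: Tset_def)
            show ?thesis
            proof (cases "Tset x = {l}")
              case True
              then show ?thesis using Tset_single[OF x True] G4[OF k lD] lk by (simp add: z0_def)
            next
              case False
              then obtain m where m: "m \<in> Tset x" "m \<noteq> l" using l by blast
              have mD: "m < D" and mk: "m \<noteq> k" using m kn lx by (auto simp: Tset_def)
              have c1: "G k (flip l x) = 0" using IH[of "flip l x"] Tset_flip_less[OF l] x by simp
              have c2: "G k (flip m x) = 0" using IH[of "flip m x"] Tset_flip_less[OF m(1)] x by simp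
              have lm: "l \<in> Tset (flip m x)" using l m Tset_flip[OF m(1)] by simp
              have "card (Tset (flip l (flip m x))) < card (Tset (flip m x))" by (rule Tset_flip_less[OF lm])
              also have "\<dots> < card (Tset x)" by (rule Tset_flip_less[OF m(1)])
              finally have c3: "G k (flip l (flip m x)) = 0" using IH[of "flip l (flip m x)"] x by simp
              show ?thesis using G2[OF x k lD mD lk[symmetric] mk[symmetric] m(2)[symmetric]] c1 c2 c3 by simp
            qed
          qed
        qed
      qed
    qed
    then show ?thesis using x by blast
  qed
  define c where "c = (\<lambda>p. a (fst p - 1) (snd p - 1) / 2)"
  have Cc: "Cm c k l = a k l / 2" if "k < D" "l < D" for k l
    using aanti[OF that] by (auto simp: Cm_def c_def akk)
  have eqf: "comb D c x (flip k x) = B x (flip k x)" if x: "x \<in> verts D" and k: "k < D" for x k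
  proof -
    have "comb D c x (flip k x) = 2 * sg k x * (\<Sum>l<D. a k l / 2 * sg l x)"
      using comb_flip[OF x k, of c] Cc[OF k] by simp
    also have "\<dots> = F k x"
    proof -
      have h: "(\<Sum>l<D. a k l / 2 * sg l x) = (\<Sum>l<D. a k l * sg l x) / 2"
        by (simp add: sum_divide_distrib)
      show ?thesis unfolding h by (simp add: F_def)
    qed
    also have "\<dots> = b k x" using Gz[OF k x] by (simp add: G_def)
    finally show ?thesis by (simp add: b_def)
  qed
  have "B = comb D c"
  proof (intro ext)
    fix x y
    show "B x y = comb D c x y"
    proof (cases "x \<in> verts D \<and> y \<in> verts D")
      case False
      then show ?thesis using g comb_good[of D c] by (auto simp: good_def is_mat_def)
    next
      case True
      then have x: "x \<in> verts D" and y: "y \<in> verts D" by auto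
      show ?thesis
        unfolding good_rep[OF g x y] good_rep[OF comb_good x y]
        using eqf[OF x] by (intro sum.cong refl) simp
    qed
  qed
  then show ?thesis by blast
qed

lemma finite_pairs: "finite (pairs D)"
proof -
  have "pairs D \<subseteq> {1..D} \<times> {1..D}" by (auto simp: pairs_def)
  then show ?thesis by (rule finite_subset) simp
qed

lemma gen_comb:
  assumes "p \<in> pairs D"
  shows "gen D (fst p) (snd p) = comb D (\<lambda>q. if q = p then 1 else 0)"
proof (intro ext)
  fix x y
  have "comb D (\<lambda>q. if q = p then 1 else 0) x y = (\<Sum>q\<in>pairs D. if q = p then gen D (fst q) (snd q) x y else 0)"
    unfolding comb_def by (intro sum.cong refl) simp
  also have "\<dots> = gen D (fst p) (snd p) x y" using assms finite_pairs by simp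
  finally show "gen D (fst p) (snd p) x y = comb D (\<lambda>q. if q = p then 1 else 0) x y" by simp
qed

lemma card_pairs: "card (pairs D) = D choose 2"
proof -
  have n: "card {S. S \<subseteq> {1..D} \<and> card S = 2} = D choose 2" using n_subsets[of "{1..D}" 2] by simp
  have inj: "inj_on (\<lambda>p. {fst p, snd p}) (pairs D)"
  proof (rule inj_onI)
    fix p q assume p: "p \<in> pairs D" and q: "q \<in> pairs D" and e: "{fst p, snd p} = {fst q, snd q}"
    then show "p = q" by (auto simp: pairs_def doubleton_eq_iff)
  qed
  have img: "(\<lambda>p. {fst p, snd p}) ` pairs D = {S. S \<subseteq> {1..D} \<and> card S = 2}"
  proof
    show "(\<lambda>p. {fst p, snd p}) ` pairs D \<subseteq> {S. S \<subseteq> {1..D} \<and> card S = 2}"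
      by (auto simp: pairs_def)
    show "{S. S \<subseteq> {1..D} \<and> card S = 2} \<subseteq> (\<lambda>p. {fst p, snd p}) ` pairs D"
    proof
      fix S assume "S \<in> {S. S \<subseteq> {1..D} \<and> card S = 2}"
      then have S: "S \<subseteq> {1..D}" "card S = 2" by auto
      then obtain u v where uv: "S = {u, v}" "u \<noteq> v" by (auto simp: card_2_iff)
      show "S \<in> (\<lambda>p. {fst p, snd p}) ` pairs D"
      proof (rule image_eqI[where x="(min u v, max u v)"])
        show "S = {fst (min u v, max u v), snd (min u v, max u v)}" using uv by (auto simp: min_def max_def)
        show "(min u v, max u v) \<in> pairs D" using uv S by (auto simp: pairs_def min_def max_def)
      qed
    qed
  qed
  have "card (pairs D) = card ((\<lambda>p. {fst p, snd p}) ` pairs D)" using card_image[OF inj] by simp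
  then show ?thesis using img n by simp
qed

lemma gen_inj: "inj_on (\<lambda>p. gen D (fst p) (snd p)) (pairs D)"
proof (rule inj_onI, rule ccontr)
  fix p q assume p: "p \<in> pairs D" and q: "q \<in> pairs D"
    and e: "gen D (fst p) (snd p) = gen D (fst q) (snd q)" and ne: "p \<noteq> q"
  define c where "c = (\<lambda>r::nat\<times>nat. (if r = p then 1 else 0) - (if r = q then 1 else (0::real)))"
  have "comb D c = (\<lambda>x y. 0)"
  proof (intro ext)
    fix x y
    have "comb D c x y = (\<Sum>r\<in>pairs D. (if r = p then gen D (fst r) (snd r) x y else 0)
                                    - (if r = q then gen D (fst r) (snd r) x y else 0))"
      unfolding comb_def c_def by (intro sum.cong refl) simp
    also have "\<dots> = gen D (fst p) (snd p) x y - gen D (fst q) (snd q) x y"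
      using p q finite_pairs by (simp add: sum_subtractf)
    also have "\<dots> = 0" using e by simp
    finally show "comb D c x y = 0" .
  qed
  then have "c p = 0" using lin_indep p by blast
  then show False using ne by (simp add: c_def)
qed

theorem theorem9p7:
  fixes D :: nat
  assumes "D \<ge> 1"
  shows "(\<forall>p\<in>pairs D. A_like D (gen D (fst p) (snd p)) \<and> antisym_mat (gen D (fst p) (snd p)))
    \<and> (\<forall>c :: nat \<times> nat \<Rightarrow> real.
          (\<lambda>x y. \<Sum>p\<in>pairs D. c p * gen D (fst p) (snd p) x y) = (\<lambda>x y. 0)
          \<longrightarrow> (\<forall>p\<in>pairs D. c p = 0))
    \<and> (\<forall>B. A_like D B \<and> antisym_mat B \<longrightarrow>
          (\<exists>c :: nat \<times> nat \<Rightarrow> real. B = (\<lambda>x y. \<Sum>p\<in>pairs D. c p * gen D (fst p) (snd p) x y)))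
    \<and> card ((\<lambda>p. gen D (fst p) (snd p)) ` pairs D) = D choose 2"
proof -
  have 1: "\<forall>p\<in>pairs D. A_like D (gen D (fst p) (snd p)) \<and> antisym_mat (gen D (fst p) (snd p))"
    using gen_comb comb_Alike comb_good unfolding good_def by metis
  have 2: "\<forall>c :: nat \<times> nat \<Rightarrow> real.
          (\<lambda>x y. \<Sum>p\<in>pairs D. c p * gen D (fst p) (snd p) x y) = (\<lambda>x y. 0)
          \<longrightarrow> (\<forall>p\<in>pairs D. c p = 0)"
    using lin_indep unfolding comb_def by blast
  have 3: "\<forall>B. A_like D B \<and> antisym_mat B \<longrightarrow>
          (\<exists>c :: nat \<times> nat \<Rightarrow> real. B = (\<lambda>x y. \<Sum>p\<in>pairs D. c p * gen D (fst p) (snd p) x y))"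
    using spanning unfolding comb_def by blast
  have 4: "card ((\<lambda>p. gen D (fst p) (snd p)) ` pairs D) = D choose 2"
    using card_image[OF gen_inj] card_pairs by simp
  show ?thesis using 1 2 3 4 by blast
qed

end
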